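(* Let $N,t\in\mathbb{Z}^+$ with $t\le N$, and let $\boldsymbol{\mu}\in\mathbb{R}_+^N$ satisfy $0<\mu[n]\le1$ for all $n$ and $\sum_{n=1}^N\mu[n]=t$. Run the following procedure: set $\boldsymbol{m}\leftarrow\boldsymbol{\mu}$, $F\leftarrow0$; while $\boldsymbol{m}$ has a nonzero entry: $F\leftarrow F+1$; $t'\leftarrow\sum_n m[n]$; let $\ell[1],\ldots,\ell[N']$ be the indices of the nonzero entries of $\boldsymbol{m}$ ordered so that $m[\ell[1]]\le\cdots\le m[\ell[N']]$; set $\mathcal{N}_F\leftarrow\{\ell[1],\ell[N'-t+2],\ldots,\ell[N']\}$; if $N'\ge t+1$ set $\alpha_F\leftarrow\min\big(\frac{t'}{t}-m[\ell[N'-t+1]],\,m[\ell[1]]\big)$, otherwise set $\alpha_F\leftarrow m[\ell[1]]$; then subtract $\alpha_F$ from $m[n]$ for every $n\in\mathcal{N}_F$. Then this loop terminates with $\boldsymbol{m}=\boldsymbol{0}$ after at most $N$ iterations (i.e., the final $F$ satisfies $F\le N$).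
   Context: This is the storage placement procedure ("Algorithm 1") for heterogeneous storage-constrained PIR: $\boldsymbol{\mu}$ is the vector of normalized database storage capacities, $t$ their sum, and each iteration $f$ assigns a sub-message set of normalized size $\alpha_f$ to the $t$ databases in $\mathcal{N}_f$ (the database with the smallest remaining nonzero storage and the $t-1$ with the largest remaining storage). *)

theory Defs
  imports Complex_Main
begin

text \<open>Databases are indexed 0..N-1 (paper: 1..N). A state is m :: nat => real; only
  entries with index < N are relevant.\<close>

definition supp_idx :: "nat \<Rightarrow> (nat \<Rightarrow> real) \<Rightarrow> nat set" where
  "supp_idx N m = {n. n < N \<and> m n \<noteq> 0}"

definition nonzero_state :: "nat \<Rightarrow> (nat \<Rightarrow> real) \<Rightarrow> bool" where
  "nonzero_state N m \<longleftrightarrow> (\<exists>n<N. m n \<noteq> 0)"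

text \<open>One iteration of Algorithm 1 with a chosen ordering l of the nonzero indices
  (0-based: l!0 = l[1]). Ties in the ordering may be broken arbitrarily; the step
  is only defined when the index l[N'-t+2] makes sense, i.e. t <= N'.\<close>
definition alg_step_with ::
  "nat \<Rightarrow> nat \<Rightarrow> (nat \<Rightarrow> real) \<Rightarrow> nat list \<Rightarrow> (nat \<Rightarrow> real) \<Rightarrow> bool" where
  "alg_step_with N t m l m' \<longleftrightarrow>
     nonzero_state N m \<and>
     distinct l \<and> set l = supp_idx N m \<and> sorted (map m l) \<and>
     t \<le> length l \<and>
     (let N' = length l;
          t' = (\<Sum>n<N. m n);
          NF = {l ! 0} \<union> {l ! j | j. N' + 1 \<le> j + t \<and> j < N'};
          \<alpha> = (if N' \<ge> t + 1 then min (t' / real t - m (l ! (N' - t))) (m (l ! 0))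
               else m (l ! 0))
      in m' = (\<lambda>n. if n \<in> NF then m n - \<alpha> else m n))"

definition alg_step :: "nat \<Rightarrow> nat \<Rightarrow> (nat \<Rightarrow> real) \<Rightarrow> (nat \<Rightarrow> real) \<Rightarrow> bool" where
  "alg_step N t m m' \<longleftrightarrow> (\<exists>l. alg_step_with N t m l m')"

definition alg_run ::
  "nat \<Rightarrow> nat \<Rightarrow> (nat \<Rightarrow> real) \<Rightarrow> (nat \<Rightarrow> nat \<Rightarrow> real) \<Rightarrow> nat \<Rightarrow> bool" where
  "alg_run N t \<mu> f k \<longleftrightarrow> f 0 = \<mu> \<and> (\<forall>i<k. alg_step N t (f i) (f (Suc i)))"

end

theory Submission
  imports Defs
begin

definition invar :: "nat \<Rightarrow> nat \<Rightarrow> (nat \<Rightarrow> real) \<Rightarrow> bool" where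
  "invar N t m \<longleftrightarrow> (\<forall>n<N. 0 \<le> m n \<and> real t * m n \<le> (\<Sum>i<N. m i))"

definition zset :: "nat \<Rightarrow> nat \<Rightarrow> (nat \<Rightarrow> real) \<Rightarrow> nat set" where
  "zset N t m = {n. n < N \<and> (m n = 0 \<or> real t * m n = (\<Sum>i<N. m i))}"

lemma sum_supp: "(\<Sum>n<N. m n) = sum m (supp_idx N m)"
  by (rule sum.mono_neutral_right) (auto simp: supp_idx_def)

lemma card_supp:
  assumes inv: "invar N t m" and nz: "nonzero_state N m"
  shows "t \<le> card (supp_idx N m)"
proof -
  define S where "S = supp_idx N m"
  define s where "s = (\<Sum>n<N. m n)"
  have fin: "finite S" unfolding S_def supp_idx_def by auto
  obtain n where n: "n < N" "m n \<noteq> 0" using nz unfolding nonzero_state_def by auto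
  have "0 \<le> m n" using inv n unfolding invar_def by auto
  hence "0 < m n" using n by auto
  also have "m n \<le> s" unfolding s_def
    by (rule member_le_sum) (use inv n in \<open>auto simp: invar_def\<close>)
  finally have spos: "0 < s" .
  have "real t * s = (\<Sum>n\<in>S. real t * m n)"
    using sum_supp[where N=N and m=m] by (simp add: sum_distrib_left S_def s_def)
  also have "\<dots> \<le> (\<Sum>n\<in>S. s)"
    by (rule sum_mono) (use inv in \<open>auto simp: invar_def S_def supp_idx_def s_def\<close>)
  also have "\<dots> = real (card S) * s" by simp
  finally have "real t \<le> real (card S)" using spos by simp
  thus ?thesis unfolding S_def by simp
qed

lemma step_exists:
  assumes inv: "invar N t m" and nz: "nonzero_state N m"
  shows "\<exists>m'. alg_step N t m m'"
proof -
  define l where "l = sort_key m (sorted_list_of_set (supp_idx N m))"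
  have fin: "finite (supp_idx N m)" unfolding supp_idx_def by auto
  have d: "distinct l" "set l = supp_idx N m" "sorted (map m l)"
    using fin by (auto simp: l_def sorted_sort_key)
  have "length l = card (supp_idx N m)"
    using d distinct_card by metis
  hence len: "t \<le> length l" using card_supp[OF inv nz] by simp
  show ?thesis unfolding alg_step_def alg_step_with_def
    apply (rule exI, rule exI[of _ l])
    using d len nz by (simp add: Let_def)
qed

lemma step_core:
  assumes inv: "invar N t m" and t1: "1 \<le> t" and st: "alg_step_with N t m l m'"
  shows "invar N t m' \<and> ((card (zset N t m) < card (zset N t m') \<and> card (zset N t m) + 2 \<le> N)
           \<or> \<not> nonzero_state N m')"
proof -
  define S where "S = supp_idx N m"
  define s where "s = (\<Sum>n<N. m n)"
  define N' where "N' = length l"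
  define NF where "NF = {l ! 0} \<union> {l ! j | j. N' + 1 \<le> j + t \<and> j < N'}"
  define \<alpha> where "\<alpha> = (if N' \<ge> t+1 then min (s/real t - m (l!(N'-t))) (m (l!0)) else m (l!0))"
  define c where "c = s / real t"
  have tpos: "0 < real t" using t1 by simp
  have sc: "s = real t * c" using tpos by (simp add: c_def)
  from st have nz: "nonzero_state N m" and dl: "distinct l" and setl: "set l = S"
    and so: "sorted (map m l)" and tN': "t \<le> N'"
    and m'def: "m' = (\<lambda>n. if n \<in> NF then m n - \<alpha> else m n)"
    unfolding alg_step_with_def Let_def S_def N'_def NF_def \<alpha>_def s_def by auto
  have finS: "finite S" and SN: "S \<subseteq> {..<N}" unfolding S_def supp_idx_def by auto
  have Spos: "0 < m n" if "n \<in> S" for n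
    using that inv unfolding S_def supp_idx_def invar_def by force
  have mle: "real t * m n \<le> s" if "n < N" for n
    using that inv unfolding s_def invar_def by auto
  have mnn: "0 \<le> m n" if "n < N" for n
    using that inv unfolding invar_def by auto
  have mc: "m n \<le> c" if "n < N" for n
    using mle[OF that] tpos sc by (simp add: mult_le_cancel_left_pos)
  have mono: "m (l!i) \<le> m (l!j)" if "i \<le> j" "j < N'" for i j
    using sorted_nth_mono[OF so, of i j] that by (simp add: N'_def)
  have lS: "l!j \<in> S" if "j < N'" for j
    using that setl nth_mem N'_def by blast
  have Sl: "\<exists>j<N'. n = l!j" if "n \<in> S" for n
    using that setl by (metis N'_def in_set_conv_nth)
  have lij: "l!i = l!j \<longleftrightarrow> i = j" if "i < N'" "j < N'" for i j
    using that dl nth_eq_iff_index_eq N'_def by blast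
  have v0le: "m (l!0) \<le> m n" if "n \<in> S" for n
    using Sl[OF that] mono by auto
  have sS: "s = sum m S" unfolding s_def S_def by (rule sum_supp)
  have setimg: "S = (\<lambda>j. l!j) ` {..<N'}"
    using setl by (auto simp: N'_def in_set_conv_nth)
  have injl: "inj_on (\<lambda>j. l!j) {..<N'}" by (rule inj_on_nth) (use dl in \<open>auto simp: N'_def\<close>)
  have sL: "s = (\<Sum>j<N'. m (l!j))"
    unfolding sS setimg by (subst sum.reindex[OF injl]) simp
  have N'pos: "0 < N'" using tN' t1 by simp
  define J where "J = insert 0 {N'+1-t..<N'}"
  have NFJ: "NF = (\<lambda>j. l!j) ` J"
    unfolding NF_def J_def using t1 tN' by (auto; force)
  have JN: "J \<subseteq> {..<N'}" unfolding J_def using N'pos by auto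
  have cardJ: "card J = t" unfolding J_def using t1 tN' by auto
  have cardNF: "card NF = t"
    unfolding NFJ using card_image[OF inj_on_subset[OF injl JN]] cardJ by simp
  have NFS: "NF \<subseteq> S" unfolding NFJ setimg using JN by auto
  have finNF: "finite NF" using NFS finS finite_subset by blast
  have s': "(\<Sum>n<N. m' n) = s - real t * \<alpha>"
  proof -
    have "(\<Sum>n<N. m' n) = (\<Sum>n<N. m n - (if n \<in> NF then \<alpha> else 0))"
      unfolding m'def by (rule sum.cong) auto
    also have "\<dots> = s - (\<Sum>n<N. (if n \<in> NF then \<alpha> else 0))"
      by (simp add: sum_subtractf s_def)
    also have "(\<Sum>n<N. (if n \<in> NF then \<alpha> else 0)) = real (card NF) * \<alpha>"
    proof -
      have "{..<N} \<inter> NF = NF" using NFS SN by auto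
      thus ?thesis by (simp add: sum.If_cases)
    qed
    finally show ?thesis using cardNF by simp
  qed
  show ?thesis
  proof (cases "N' = t")
    case True
    have "J = {..<N'}" unfolding J_def using True t1 by auto
    hence NFeq: "NF = S" unfolding NFJ setimg by simp
    have allc: "m n = c" if "n \<in> S" for n
    proof (rule ccontr)
      assume "m n \<noteq> c"
      hence "m n < c" using mc[of n] that SN by force
      hence "sum m S < sum (\<lambda>_. c) S"
        using that finS mc SN by (intro sum_strict_mono_ex1) auto
      also have "\<dots> = real t * c" using True setimg card_image[OF injl] by simp
      finally show False using sS sc by simp
    qed
    have a: "\<alpha> = c" unfolding \<alpha>_def using True allc lS N'pos by simp
    have zero: "m' n = 0" if "n < N" for n
    proof (cases "n \<in> S")
      case True thus ?thesis using allc a NFeq m'def by simp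
    next
      case False thus ?thesis using that NFeq m'def unfolding S_def supp_idx_def by auto
    qed
    have "invar N t m'" unfolding invar_def using zero by simp
    moreover have "\<not> nonzero_state N m'" unfolding nonzero_state_def using zero by simp
    ultimately show ?thesis by simp
  next
    case False
    hence big: "N' \<ge> t + 1" using tN' by simp
    define p where "p = N' - t"
    have p1: "1 \<le> p" "p < N'" using big t1 by (auto simp: p_def)
    have vp: "m (l!p) < c"
    proof (rule ccontr)
      assume "\<not> m (l!p) < c"
      hence ge: "m (l!j) \<ge> c" if "p \<le> j" "j < N'" for j using mono[OF that] by simp
      have "m (l!0) + real t * c = m (l!0) + (\<Sum>j\<in>{p..<N'}. c)" using tN' by (simp add: p_def of_nat_diff)
      also have "\<dots> \<le> m (l!0) + (\<Sum>j\<in>{p..<N'}. m (l!j))"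
        using ge by (intro add_left_mono sum_mono) auto
      also have "\<dots> = (\<Sum>j\<in>insert 0 {p..<N'}. m (l!j))" using p1 by simp
      also have "\<dots> \<le> (\<Sum>j<N'. m (l!j))"
        by (rule sum_mono2) (use p1 lS Spos in \<open>auto intro: less_imp_le\<close>)
      finally show False using sL sc Spos[OF lS[OF N'pos]] by simp
    qed
    have a: "\<alpha> = min (c - m (l!p)) (m (l!0))" unfolding \<alpha>_def c_def p_def using big by simp
    have apos: "0 < \<alpha>" using a vp Spos[OF lS[OF N'pos]] by simp
    have a0: "\<alpha> \<le> m (l!0)" and ap: "\<alpha> \<le> c - m (l!p)" using a by auto
    have NFj: "l!j \<in> NF \<longleftrightarrow> j = 0 \<or> p < j" if "j < N'" for j
    proof -
      have "l!j \<in> NF \<longleftrightarrow> j \<in> J" unfolding NFJ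
        using that JN lij by blast
      also have "\<dots> \<longleftrightarrow> j = 0 \<or> p < j" unfolding J_def p_def using that tN' by auto
      finally show ?thesis .
    qed
    have s'c: "(\<Sum>n<N. m' n) = real t * (c - \<alpha>)" using s' sc by (simp add: algebra_simps)
    have vpnn: "0 \<le> m (l!p)" using Spos[OF lS[OF p1(2)]] by simp
    have inv': "invar N t m'" unfolding invar_def s'c
    proof (intro allI impI conjI)
      fix n assume n: "n < N"
      show "0 \<le> m' n"
      proof (cases "n \<in> NF")
        case True thus ?thesis using v0le[of n] NFS a0 m'def by auto
      next
        case False thus ?thesis using mnn[OF n] m'def by simp
      qed
      show "real t * m' n \<le> real t * (c - \<alpha>)"
      proof (cases "n \<in> NF")
        case True thus ?thesis using mc[OF n] m'def tpos by simp
      next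
        case False
        note nNF = False
        show ?thesis
        proof (cases "n \<in> S")
          case True
          then obtain j where j: "j < N'" "n = l!j" using Sl by blast
          hence "j \<le> p" using NFj nNF by auto
          hence "m n \<le> m (l!p)" using mono j p1 by simp
          thus ?thesis using nNF m'def ap tpos by simp
        next
          case False
          hence "m n = 0" using n unfolding S_def supp_idx_def by auto
          thus ?thesis using nNF m'def ap tpos vpnn by simp
        qed
      qed
    qed
    have zs: "zset N t m \<subseteq> zset N t m'"
    proof
      fix n assume "n \<in> zset N t m"
      hence n: "n < N" and disj: "m n = 0 \<or> real t * m n = s" unfolding zset_def s_def by auto
      from disj show "n \<in> zset N t m'"
      proof
        assume "m n = 0"
        hence "n \<notin> NF" using NFS Spos by force
        thus ?thesis using n \<open>m n = 0\<close> m'def unfolding zset_def by simp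
      next
        assume h: "real t * m n = s"
        show ?thesis
        proof (cases "m n = 0")
          case True
          hence "n \<notin> NF" using NFS Spos by force
          thus ?thesis using n True m'def unfolding zset_def by simp
        next
          case False
          hence "n \<in> S" using n unfolding S_def supp_idx_def by auto
          then obtain j where j: "j < N'" "n = l!j" using Sl by blast
          have "\<not> j \<le> p"
          proof
            assume "j \<le> p"
            hence "m n \<le> m (l!p)" using mono j p1 by simp
            thus False using vp h sc tpos by simp
          qed
          hence "n \<in> NF" using NFj j by auto
          hence "m' n = m n - \<alpha>" using m'def by simp
          hence "real t * m' n = real t * (c - \<alpha>)" using h sc tpos by (simp add: right_diff_distrib)
          thus ?thesis using n s'c unfolding zset_def by simp
        qed
      qed
    qed
    have notz: "l!i \<notin> zset N t m" if "i \<le> p" for i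
    proof -
      have i: "i < N'" using that p1 by simp
      have "0 < m (l!i)" using Spos lS i by blast
      moreover have "m (l!i) < c" using mono[OF that p1(2)] vp by simp
      ultimately show ?thesis unfolding zset_def s_def[symmetric] using sc tpos by auto
    qed
    define w where "w = (if \<alpha> = m (l!0) then l!0 else l!p)"
    have wN: "w < N" unfolding w_def using lS SN p1 N'pos by auto
    have wnz: "w \<notin> zset N t m" unfolding w_def using notz p1 by auto
    have wz: "w \<in> zset N t m'"
    proof (cases "\<alpha> = m (l!0)")
      case True
      have "l!0 \<in> NF" using NFj N'pos by simp
      thus ?thesis using True wN m'def unfolding w_def zset_def by simp
    next
      case False
      hence ae: "\<alpha> = c - m (l!p)" using a by linarith
      have "l!p \<notin> NF" using NFj p1 by simp
      hence "m' (l!p) = c - \<alpha>" using m'def ae by simp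
      thus ?thesis using False wN s'c unfolding w_def zset_def by simp
    qed
    have finz: "finite (zset N t m')" unfolding zset_def by auto
    have lt: "card (zset N t m) < card (zset N t m')"
      by (rule psubset_card_mono[OF finz]) (use zs wz wnz in blast)
    have "zset N t m \<subseteq> {..<N} - {l!0, l!p}"
      using notz p1 unfolding zset_def by auto
    hence "card (zset N t m) \<le> card ({..<N} - {l!0, l!p})"
      by (intro card_mono) auto
    also have "\<dots> = N - 2"
    proof -
      have "{l!0, l!p} \<subseteq> {..<N}" using lS SN p1 N'pos by auto
      moreover have "l!0 \<noteq> l!p" using lij p1 by simp
      ultimately show ?thesis by (simp add: card_Diff_subset)
    qed
    finally have "card (zset N t m) + 2 \<le> N"
    proof -
      have "2 \<le> N"
      proof -
        have "{l!0, l!p} \<subseteq> {..<N}" using lS SN p1 N'pos by auto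
        moreover have "l!0 \<noteq> l!p" using lij p1 by simp
        ultimately have "card {l!0, l!p} \<le> card {..<N}" by (intro card_mono) auto
        thus ?thesis using \<open>l!0 \<noteq> l!p\<close> by simp
      qed
      thus "card (zset N t m) \<le> N - 2 \<Longrightarrow> card (zset N t m) + 2 \<le> N" by simp
    qed
    thus ?thesis using inv' lt by simp
  qed
qed

theorem theorem3:
  fixes N t :: nat and \<mu> :: "nat \<Rightarrow> real"
  assumes "1 \<le> t" and "t \<le> N"
    and "\<And>n. n < N \<Longrightarrow> 0 < \<mu> n \<and> \<mu> n \<le> 1"
    and "(\<Sum>n<N. \<mu> n) = real t"
  shows "(\<forall>f k. alg_run N t \<mu> f k \<longrightarrow>
            k \<le> N \<and> (nonzero_state N (f k) \<longrightarrow> (\<exists>m'. alg_step N t (f k) m')))"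
proof (intro allI impI)
  fix f k assume run: "alg_run N t \<mu> f k"
  have f0: "f 0 = \<mu>" and steps: "\<And>i. i < k \<Longrightarrow> alg_step N t (f i) (f (Suc i))"
    using run unfolding alg_run_def by auto
  have inv0: "invar N t \<mu>" unfolding invar_def
  proof (intro allI impI conjI)
    fix n assume n: "n < N"
    show "0 \<le> \<mu> n" using assms(3)[OF n] by simp
    show "real t * \<mu> n \<le> (\<Sum>i<N. \<mu> i)"
      using assms(3)[OF n] assms(4) assms(1) by (simp add: mult_left_le)
  qed
  have invall0: "i \<le> k \<longrightarrow> invar N t (f i)" for i
  proof (induction i)
    case 0 thus ?case using f0 inv0 by simp
  next
    case (Suc i)
    show ?case
    proof
      assume le: "Suc i \<le> k"
      hence "invar N t (f i)" using Suc.IH by simp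
      moreover obtain l where "alg_step_with N t (f i) l (f (Suc i))"
        using steps[of i] le unfolding alg_step_def by auto
      ultimately show "invar N t (f (Suc i))" using step_core assms(1) by blast
    qed
  qed
  have invall: "invar N t (f i)" if "i \<le> k" for i using invall0 that by blast
  have props: "(card (zset N t (f i)) < card (zset N t (f (Suc i))) \<and> card (zset N t (f i)) + 2 \<le> N)"
    if si: "Suc i < k" for i
  proof -
    have "invar N t (f i)" using invall si by simp
    moreover obtain l where "alg_step_with N t (f i) l (f (Suc i))"
      using steps[of i] si unfolding alg_step_def by auto
    ultimately have d: "(card (zset N t (f i)) < card (zset N t (f (Suc i))) \<and> card (zset N t (f i)) + 2 \<le> N)
        \<or> \<not> nonzero_state N (f (Suc i))" using step_core assms(1) by blast
    have "nonzero_state N (f (Suc i))" using steps[OF si] unfolding alg_step_def alg_step_with_def by auto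
    thus ?thesis using d by blast
  qed
  have grow0: "i < k \<longrightarrow> i \<le> card (zset N t (f i))" for i
  proof (induction i)
    case 0 thus ?case by simp
  next
    case (Suc i) thus ?case using props[of i] by auto
  qed
  have grow: "i \<le> card (zset N t (f i))" if "i < k" for i using grow0 that by blast
  show "k \<le> N \<and> (nonzero_state N (f k) \<longrightarrow> (\<exists>m'. alg_step N t (f k) m'))"
  proof
    show "k \<le> N"
    proof (cases "k \<le> 1")
      case True thus ?thesis using assms(1,2) by simp
    next
      case False
      hence "Suc (k - 2) < k" by simp
      from props[OF this] grow[of "k-2"] False show ?thesis by linarith
    qed
    show "nonzero_state N (f k) \<longrightarrow> (\<exists>m'. alg_step N t (f k) m')"
      using step_exists invall[of k] by simp
  qed
qed

end
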